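(* The relations $\le_1$, $\le_2$ and $\le_3$ are partial orders on $\mathbf K_{\rm fnq}$.
   Context: $\mathbf K_{\rm fnq}$ is the class of structures $M$ in the vocabulary consisting of unary predicates $P,Q$, a ternary relation $E$, and $n$-ary relations $Q_{n,k}$ ($n,k\ge1$), such that: (a) $P^M,Q^M$ partition the universe of $M$ and $P^M\neq\emptyset$; (b) $E^M\subseteq P^M\times P^M\times Q^M$, and we write $aE^M_cb$ for $(a,b,c)\in E^M$; (c) for $c\in Q^M$, $E^M_c$ is an equivalence relation on $P^M$ and $\sup\{|a/E^M_c|:a\in P^M\}$ is finite; (d) $Q^M_{n,k}\subseteq (Q^M)^n$; (e) for $\bar c=\langle c_\ell:\ell<n\rangle\in{}^n(Q^M)$, $E^M_{\bar c}$ denotes the equivalence relation on $P^M$ generated by $\bigcup_\ell E^M_{c_\ell}$; (f) ${}^n(Q^M)=\bigcup_{k\ge1}Q^M_{n,k}$; (g) if $\bar c\in Q^M_{n,k}$ then $|a/E^M_{\bar c}|\le k$ for every $a\in P^M$. For $M,N\in\mathbf K_{\rm fnq}$: $M\le_1N$ iff $M$ is a substructure of $N$. $M\le_3N$ iff $M\subseteq N$ and for every countable $A\subseteq N$ with $A\cap Q^N$ finite there is a one-to-one homomorphism (e.g. an embedding) from $N{\restriction}A$ into $M$ which is the identity on $A\cap M$. $M\le_2N$ is defined like $\le_3$ but only for finite $A\subseteq N$. *)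

theory Defs
  imports Main "HOL-Library.Countable_Set"
begin

text \<open>Structures in the vocabulary {P, Q, E, Q_{n,k} (n,k >= 1)}.
  Tuples of length n are represented as lists of length n.
  Ternary E is a set of triples (a,b,c), meaning a E_c b.\<close>

record 'a fnq_str =
  univ :: "'a set"
  PP   :: "'a set"
  QQ   :: "'a set"
  EE   :: "('a \<times> 'a \<times> 'a) set"
  QR   :: "nat \<Rightarrow> nat \<Rightarrow> 'a list set"

definition Erel :: "'a fnq_str \<Rightarrow> 'a \<Rightarrow> 'a rel" where
  "Erel M c = {(a, b). (a, b, c) \<in> EE M}"

definition Egen :: "'a fnq_str \<Rightarrow> 'a list \<Rightarrow> 'a rel" where
  "Egen M cs = (let U = (\<Union>c\<in>set cs. Erel M c) in (Id_on (PP M) \<union> U \<union> U\<inverse>)\<^sup>+)"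

definition K_fnq :: "'a fnq_str \<Rightarrow> bool" where
  "K_fnq M \<longleftrightarrow>
     \<comment> \<open>(a) P, Q partition the universe, P nonempty\<close>
     PP M \<union> QQ M = univ M \<and> PP M \<inter> QQ M = {} \<and> PP M \<noteq> {} \<and>
     \<comment> \<open>(b)\<close>
     EE M \<subseteq> PP M \<times> PP M \<times> QQ M \<and>
     \<comment> \<open>(c)\<close>
     (\<forall>c\<in>QQ M. equiv (PP M) (Erel M c) \<and>
        (\<exists>m::nat. \<forall>a\<in>PP M. finite (Erel M c `` {a}) \<and> card (Erel M c `` {a}) \<le> m)) \<and>
     \<comment> \<open>(d) Q_{n,k} is an n-ary relation on Q, only for n,k >= 1\<close>
     (\<forall>n k. QR M n k \<subseteq> {cs. length cs = n \<and> set cs \<subseteq> QQ M}) \<and>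
     (\<forall>n k. (n = 0 \<or> k = 0) \<longrightarrow> QR M n k = {}) \<and>
     \<comment> \<open>(f)\<close>
     (\<forall>n\<ge>1. \<forall>cs. length cs = n \<and> set cs \<subseteq> QQ M \<longrightarrow> (\<exists>k\<ge>1. cs \<in> QR M n k)) \<and>
     \<comment> \<open>(g)\<close>
     (\<forall>n k cs. cs \<in> QR M n k \<longrightarrow>
        (\<forall>a\<in>PP M. finite (Egen M cs `` {a}) \<and> card (Egen M cs `` {a}) \<le> k))"

definition substr :: "'a fnq_str \<Rightarrow> 'a fnq_str \<Rightarrow> bool" where
  "substr M N \<longleftrightarrow> univ M \<subseteq> univ N \<and>
     PP M = PP N \<inter> univ M \<and> QQ M = QQ N \<inter> univ M \<and>
     EE M = EE N \<inter> (univ M \<times> univ M \<times> univ M) \<and>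
     (\<forall>n k. QR M n k = {cs \<in> QR N n k. set cs \<subseteq> univ M})"

definition inj_hom_on :: "('a \<Rightarrow> 'a) \<Rightarrow> 'a fnq_str \<Rightarrow> 'a set \<Rightarrow> 'a fnq_str \<Rightarrow> bool" where
  "inj_hom_on h N A M \<longleftrightarrow> inj_on h A \<and> h ` A \<subseteq> univ M \<and>
     (\<forall>x\<in>A. x \<in> PP N \<longrightarrow> h x \<in> PP M) \<and>
     (\<forall>x\<in>A. x \<in> QQ N \<longrightarrow> h x \<in> QQ M) \<and>
     (\<forall>a\<in>A. \<forall>b\<in>A. \<forall>c\<in>A. (a, b, c) \<in> EE N \<longrightarrow> (h a, h b, h c) \<in> EE M) \<and>
     (\<forall>n k cs. cs \<in> QR N n k \<and> set cs \<subseteq> A \<longrightarrow> map h cs \<in> QR M n k)"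

definition le1 :: "'a fnq_str \<Rightarrow> 'a fnq_str \<Rightarrow> bool" where
  "le1 M N \<longleftrightarrow> substr M N"

definition le2 :: "'a fnq_str \<Rightarrow> 'a fnq_str \<Rightarrow> bool" where
  "le2 M N \<longleftrightarrow> substr M N \<and>
     (\<forall>A. A \<subseteq> univ N \<and> finite A \<longrightarrow>
        (\<exists>h. inj_hom_on h N A M \<and> (\<forall>x\<in>A \<inter> univ M. h x = x)))"

definition le3 :: "'a fnq_str \<Rightarrow> 'a fnq_str \<Rightarrow> bool" where
  "le3 M N \<longleftrightarrow> substr M N \<and>
     (\<forall>A. A \<subseteq> univ N \<and> countable A \<and> finite (A \<inter> QQ N) \<longrightarrow>
        (\<exists>h. inj_hom_on h N A M \<and> (\<forall>x\<in>A \<inter> univ M. h x = x)))"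

definition rel_on_K :: "('a fnq_str \<Rightarrow> 'a fnq_str \<Rightarrow> bool) \<Rightarrow> 'a fnq_str rel" where
  "rel_on_K R = {(M, N). K_fnq M \<and> K_fnq N \<and> R M N}"

end

theory Submission
  imports Defs
begin

lemma K_fnq_1: "K_fnq M \<Longrightarrow> PP M \<union> QQ M = univ M"
  unfolding K_fnq_def by (elim conjE)
lemma K_fnq_2: "K_fnq M \<Longrightarrow> PP M \<inter> QQ M = {}"
  unfolding K_fnq_def by (elim conjE)
lemma K_fnq_3: "K_fnq M \<Longrightarrow> EE M \<subseteq> PP M \<times> PP M \<times> QQ M"
  unfolding K_fnq_def by (elim conjE)
lemma K_fnq_4: "K_fnq M \<Longrightarrow> QR M n k \<subseteq> {cs. length cs = n \<and> set cs \<subseteq> QQ M}"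
  unfolding K_fnq_def by (elim conjE) blast
lemmas K_fnq_facts = K_fnq_1 K_fnq_2 K_fnq_3 K_fnq_4

lemma substr_refl: assumes "K_fnq M" shows "substr M M"
proof -
  note f = K_fnq_facts[OF assms]
  have e: "EE M \<inter> (univ M \<times> univ M \<times> univ M) = EE M" using f(1,3) by blast
  have q: "\<forall>n k. QR M n k = {cs \<in> QR M n k. set cs \<subseteq> univ M}" using f(1) K_fnq_4[OF assms] by blast
  have p: "PP M \<inter> univ M = PP M" "QQ M \<inter> univ M = QQ M" using f(1) by blast+
  show ?thesis unfolding substr_def using e q p by simp
qed

lemma substr_trans: "substr M N \<Longrightarrow> substr N L \<Longrightarrow> substr M L"
  unfolding substr_def by auto

lemma substr_antisym:
  assumes "substr M N" "substr N M" shows "M = N"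
proof -
  have u: "univ M = univ N" using assms unfolding substr_def by auto
  have p: "PP M = PP N" "QQ M = QQ N" "EE M = EE N"
    using assms unfolding substr_def by blast+
  have q: "QR M = QR N"
  proof (intro ext)
    fix n k show "QR M n k = QR N n k" using assms unfolding substr_def by blast
  qed
  show ?thesis using u p q by simp
qed

lemma hom_id: "A \<subseteq> univ M \<Longrightarrow> inj_hom_on id M A M"
  unfolding inj_hom_on_def by auto

lemma hom_comp:
  assumes "inj_hom_on h1 L A N" "inj_hom_on h2 N (h1 ` A) M"
  shows "inj_hom_on (h2 \<circ> h1) L A M"
proof -
  have i: "inj_on (h2 \<circ> h1) A"
    using assms unfolding inj_hom_on_def by (auto intro: comp_inj_on)
  have qr: "\<forall>n k cs. cs \<in> QR L n k \<and> set cs \<subseteq> A \<longrightarrow> map (h2 \<circ> h1) cs \<in> QR M n k"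
  proof (intro allI impI)
    fix n k cs assume a: "cs \<in> QR L n k \<and> set cs \<subseteq> A"
    then have "map h1 cs \<in> QR N n k" using assms(1) unfolding inj_hom_on_def by blast
    moreover have "set (map h1 cs) \<subseteq> h1 ` A" using a by auto
    ultimately have "map h2 (map h1 cs) \<in> QR M n k" using assms(2) unfolding inj_hom_on_def by blast
    then show "map (h2 \<circ> h1) cs \<in> QR M n k" by simp
  qed
  have a: "(h2 \<circ> h1) ` A \<subseteq> univ M" using assms unfolding inj_hom_on_def by (simp add: image_comp[symmetric]) blast
  have b: "\<forall>x\<in>A. x \<in> PP L \<longrightarrow> (h2 \<circ> h1) x \<in> PP M" using assms unfolding inj_hom_on_def by simp
  have c: "\<forall>x\<in>A. x \<in> QQ L \<longrightarrow> (h2 \<circ> h1) x \<in> QQ M" using assms unfolding inj_hom_on_def by simp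
  have d: "\<forall>a\<in>A. \<forall>b\<in>A. \<forall>c\<in>A. (a, b, c) \<in> EE L \<longrightarrow> ((h2 \<circ> h1) a, (h2 \<circ> h1) b, (h2 \<circ> h1) c) \<in> EE M"
    using assms unfolding inj_hom_on_def by simp
  show ?thesis using i qr a b c d unfolding inj_hom_on_def by blast
qed

lemma hom_Q_back:
  assumes "K_fnq L" "K_fnq N" "inj_hom_on h L A N" "A \<subseteq> univ L" "x \<in> A" "h x \<in> QQ N"
  shows "x \<in> QQ L"
proof (rule ccontr)
  assume "x \<notin> QQ L"
  then have "x \<in> PP L" using K_fnq_facts(1)[OF assms(1)] assms(4,5) by blast
  then have "h x \<in> PP N" using assms(3,5) unfolding inj_hom_on_def by blast
  then show False using K_fnq_facts(2)[OF assms(2)] assms(6) by blast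
qed

lemma le2_sub: "le2 M N \<Longrightarrow> substr M N" unfolding le2_def by (elim conjE)
lemma le3_sub: "le3 M N \<Longrightarrow> substr M N" unfolding le3_def by (elim conjE)
lemma substr_univ: "substr M N \<Longrightarrow> univ M \<subseteq> univ N" unfolding substr_def by (elim conjE)

lemma le2_ext:
  assumes "le2 M N" "A \<subseteq> univ N" "finite A"
  shows "\<exists>h. inj_hom_on h N A M \<and> (\<forall>x\<in>A \<inter> univ M. h x = x)"
proof -
  have "\<forall>A. A \<subseteq> univ N \<and> finite A \<longrightarrow>
        (\<exists>h. inj_hom_on h N A M \<and> (\<forall>x\<in>A \<inter> univ M. h x = x))"
    using assms(1) unfolding le2_def by (elim conjE)
  then show ?thesis using assms(2,3) by simp
qed

lemma le3_ext:
  assumes "le3 M N" "A \<subseteq> univ N" "countable A" "finite (A \<inter> QQ N)"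
  shows "\<exists>h. inj_hom_on h N A M \<and> (\<forall>x\<in>A \<inter> univ M. h x = x)"
proof -
  have "\<forall>A. A \<subseteq> univ N \<and> countable A \<and> finite (A \<inter> QQ N) \<longrightarrow>
        (\<exists>h. inj_hom_on h N A M \<and> (\<forall>x\<in>A \<inter> univ M. h x = x))"
    using assms(1) unfolding le3_def by (elim conjE)
  then show ?thesis using assms(2,3,4) by simp
qed

lemma le2_I:
  assumes "substr M N" "\<And>A. A \<subseteq> univ N \<Longrightarrow> finite A \<Longrightarrow>
     \<exists>h. inj_hom_on h N A M \<and> (\<forall>x\<in>A \<inter> univ M. h x = x)"
  shows "le2 M N"
  unfolding le2_def using assms by blast

lemma le3_I:
  assumes "substr M N" "\<And>A. A \<subseteq> univ N \<Longrightarrow> countable A \<Longrightarrow> finite (A \<inter> QQ N) \<Longrightarrow>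
     \<exists>h. inj_hom_on h N A M \<and> (\<forall>x\<in>A \<inter> univ M. h x = x)"
  shows "le3 M N"
  unfolding le3_def using assms by blast

lemma id_ext: "A \<subseteq> univ M \<Longrightarrow> \<exists>h. inj_hom_on h M A M \<and> (\<forall>x\<in>A \<inter> univ M. h x = x)"
  using hom_id by (intro exI[of _ id]) simp

lemma le2_refl: "K_fnq M \<Longrightarrow> le2 M M"
  by (rule le2_I) (auto intro: substr_refl id_ext)

lemma le3_refl: "K_fnq M \<Longrightarrow> le3 M M"
  by (rule le3_I) (auto intro: substr_refl id_ext)

lemma comp_ext:
  assumes h1: "inj_hom_on h1 L A N" "\<forall>x\<in>A \<inter> univ N. h1 x = x"
    and h2: "inj_hom_on h2 N (h1 ` A) M" "\<forall>x\<in>h1 ` A \<inter> univ M. h2 x = x"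
    and MN: "univ M \<subseteq> univ N"
  shows "\<exists>h. inj_hom_on h L A M \<and> (\<forall>x\<in>A \<inter> univ M. h x = x)"
proof (intro exI conjI)
  show "inj_hom_on (h2 \<circ> h1) L A M" using hom_comp h1 h2 by blast
  show "\<forall>x\<in>A \<inter> univ M. (h2 \<circ> h1) x = x"
  proof
    fix x assume x: "x \<in> A \<inter> univ M"
    then have e: "h1 x = x" using h1(2) MN by blast
    have "h1 x \<in> h1 ` A" using x by blast
    moreover have "h1 x \<in> univ M" using x e by simp
    ultimately have "h1 x \<in> h1 ` A \<inter> univ M" by blast
    then show "(h2 \<circ> h1) x = x" using h2(2) e by simp
  qed
qed

lemma le2_trans:
  assumes "le2 M N" "le2 N L" shows "le2 M L"
proof (rule le2_I)
  show "substr M L" using assms le2_sub substr_trans by blast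
  fix A assume A: "A \<subseteq> univ L" "finite A"
  obtain h1 where h1: "inj_hom_on h1 L A N" "\<forall>x\<in>A \<inter> univ N. h1 x = x"
    using le2_ext[OF assms(2) A] by blast
  have B: "h1 ` A \<subseteq> univ N" "finite (h1 ` A)" using h1(1) A(2) unfolding inj_hom_on_def by simp_all
  obtain h2 where h2: "inj_hom_on h2 N (h1 ` A) M" "\<forall>x\<in>h1 ` A \<inter> univ M. h2 x = x"
    using le2_ext[OF assms(1) B] by blast
  show "\<exists>h. inj_hom_on h L A M \<and> (\<forall>x\<in>A \<inter> univ M. h x = x)"
    by (rule comp_ext[OF h1 h2 substr_univ[OF le2_sub[OF assms(1)]]])
qed

lemma le3_trans:
  assumes "le3 M N" "le3 N L" "K_fnq L" "K_fnq N" shows "le3 M L"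
proof (rule le3_I)
  show "substr M L" using assms le3_sub substr_trans by blast
  fix A assume A: "A \<subseteq> univ L" "countable A" "finite (A \<inter> QQ L)"
  obtain h1 where h1: "inj_hom_on h1 L A N" "\<forall>x\<in>A \<inter> univ N. h1 x = x"
    using le3_ext[OF assms(2) A] by blast
  have "h1 ` A \<inter> QQ N \<subseteq> h1 ` (A \<inter> QQ L)"
    using hom_Q_back[OF assms(3,4) h1(1) A(1)] by blast
  then have "finite (h1 ` A \<inter> QQ N)" using A(3) finite_subset by blast
  moreover have "h1 ` A \<subseteq> univ N" using h1(1) unfolding inj_hom_on_def by simp
  moreover have "countable (h1 ` A)" using A(2) by simp
  ultimately obtain h2 where h2: "inj_hom_on h2 N (h1 ` A) M" "\<forall>x\<in>h1 ` A \<inter> univ M. h2 x = x"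
    using le3_ext[OF assms(1)] by blast
  show "\<exists>h. inj_hom_on h L A M \<and> (\<forall>x\<in>A \<inter> univ M. h x = x)"
    by (rule comp_ext[OF h1 h2 substr_univ[OF le3_sub[OF assms(1)]]])
qed

theorem claim3p3:
  shows "partial_order_on {M :: 'a fnq_str. K_fnq M} (rel_on_K le1) \<and>
         partial_order_on {M :: 'a fnq_str. K_fnq M} (rel_on_K le2) \<and>
         partial_order_on {M :: 'a fnq_str. K_fnq M} (rel_on_K le3)"
proof (intro conjI)
  show "partial_order_on {M :: 'a fnq_str. K_fnq M} (rel_on_K le1)"
    unfolding partial_order_on_def preorder_on_def refl_on_def trans_def antisym_def rel_on_K_def le1_def
  proof (intro conjI)
    show "\<forall>x y z. (x, y) \<in> {(M, N). K_fnq M \<and> K_fnq N \<and> substr M N} \<longrightarrow>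
        (y, z) \<in> {(M, N). K_fnq M \<and> K_fnq N \<and> substr M N} \<longrightarrow>
        (x, z) \<in> {(M, N). K_fnq M \<and> K_fnq N \<and> substr M N}" using substr_trans by blast
    show "\<forall>x y. (x, y) \<in> {(M, N). K_fnq M \<and> K_fnq N \<and> substr M N} \<longrightarrow>
        (y, x) \<in> {(M, N). K_fnq M \<and> K_fnq N \<and> substr M N} \<longrightarrow> x = y"
      using substr_antisym by blast
  qed (auto simp: substr_refl)
  show "partial_order_on {M :: 'a fnq_str. K_fnq M} (rel_on_K le2)"
    unfolding partial_order_on_def preorder_on_def refl_on_def trans_def antisym_def rel_on_K_def
  proof (intro conjI)
    show "{(M, N). K_fnq M \<and> K_fnq N \<and> le2 M N} \<subseteq> {M. K_fnq M} \<times> {M. K_fnq M}" by auto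
    show "\<forall>x\<in>{M. K_fnq M}. (x, x) \<in> {(M, N). K_fnq M \<and> K_fnq N \<and> le2 M N}" using le2_refl by auto
    show "\<forall>x y z. (x, y) \<in> {(M, N). K_fnq M \<and> K_fnq N \<and> le2 M N} \<longrightarrow>
        (y, z) \<in> {(M, N). K_fnq M \<and> K_fnq N \<and> le2 M N} \<longrightarrow>
        (x, z) \<in> {(M, N). K_fnq M \<and> K_fnq N \<and> le2 M N}" using le2_trans by blast
    show "\<forall>x y. (x, y) \<in> {(M, N). K_fnq M \<and> K_fnq N \<and> le2 M N} \<longrightarrow>
        (y, x) \<in> {(M, N). K_fnq M \<and> K_fnq N \<and> le2 M N} \<longrightarrow> x = y"
      using substr_antisym le2_sub by blast
  qed
  show "partial_order_on {M :: 'a fnq_str. K_fnq M} (rel_on_K le3)"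
    unfolding partial_order_on_def preorder_on_def refl_on_def trans_def antisym_def rel_on_K_def
  proof (intro conjI)
    show "{(M, N). K_fnq M \<and> K_fnq N \<and> le3 M N} \<subseteq> {M. K_fnq M} \<times> {M. K_fnq M}" by auto
    show "\<forall>x\<in>{M. K_fnq M}. (x, x) \<in> {(M, N). K_fnq M \<and> K_fnq N \<and> le3 M N}" using le3_refl by auto
    show "\<forall>x y z. (x, y) \<in> {(M, N). K_fnq M \<and> K_fnq N \<and> le3 M N} \<longrightarrow>
        (y, z) \<in> {(M, N). K_fnq M \<and> K_fnq N \<and> le3 M N} \<longrightarrow>
        (x, z) \<in> {(M, N). K_fnq M \<and> K_fnq N \<and> le3 M N}" using le3_trans by blast
    show "\<forall>x y. (x, y) \<in> {(M, N). K_fnq M \<and> K_fnq N \<and> le3 M N} \<longrightarrow>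
        (y, x) \<in> {(M, N). K_fnq M \<and> K_fnq N \<and> le3 M N} \<longrightarrow> x = y"
      using substr_antisym le3_sub by blast
  qed
qed

end
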